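(* Assume (FWW) for a flow $\Phi_t$ on $\mathbb{R}^n$ and a $k$-cone $C$. Let $\mathcal{D}\subset\mathbb{R}^n$ be open and $\omega$-compact, let $x\in\mathcal{D}$, and consider the $k$-exponential separation of $(\Phi_t,D\Phi_t)$ along $\omega(x)$ associated with $C$. Assume $\lambda_{kz}>0$ for every $z\in\omega(x)$. Then there exists a constant $\delta>0$ such that $$\limsup_{t\to+\infty}\|\Phi_t(y)-\Phi_t(x)\|\ge\delta$$ whenever $y\ne x$ and $y\sim x$.
   Context: A closed set $C\subset\mathbb{R}^n$ is a $k$-cone if $lv\in C$ for all $v\in C$, $l\in\mathbb{R}$, and the maximal dimension of a linear subspace contained in $C$ is $k$. $C$ is $k$-solid if there is a $k$-dimensional subspace $W$ with $W\setminus\{0\}\subset\operatorname{Int}C$. Write $x\sim y$ if $x-y\in C$ and $x\approx y$ if $x-y\in\operatorname{Int}C$. A flow $\Phi_t$ is strongly monotone with respect to a $k$-solid cone $C$ if $x\sim y$ implies $\Phi_t(x)\sim\Phi_t(y)$ for $t\ge0$, and $x\ne y$, $x\sim y$ imply $\Phi_t(x)\approx\Phi_t(y)$ for $t>0$. Assumption (FWW): the flow $\Phi_t$ on $\mathbb{R}^n$ is $C^{1,\alpha}$-smooth ($C^1$ with locally $\alpha$-Hölder derivative, $\alpha\in(0,1]$), strongly monotone with respect to the $k$-cone $C$, and $D_x\Phi_t(C\setminus\{0\})\subset\operatorname{Int}C$ for $t>0$. A set $\mathcal{D}$ is $\omega$-compact if every forward orbit from $\mathcal{D}$ is bounded and $\bigcup_{x\in\mathcal{D}}\omega(x)$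 is bounded. A $k$-exponential separation along a compact invariant set $K$ associated with $C$ consists of continuous (in the Grassmannian gap metric) families of $k$-dimensional subspaces $E_y$ and $(n-k)$-dimensional subspaces $F_y$, $y\in K$, with $\mathbb{R}^n=E_y\oplus F_y$, $D_y\Phi_tE_y=E_{\Phi_t(y)}$, $D_y\Phi_tF_y\subset F_{\Phi_t(y)}$ ($t>0$), constants $M>0$, $0<\gamma<1$ with $\|D_y\Phi_tw\|\le M\gamma^t\|D_y\Phi_tv\|$ for unit $w\in F_y$, $v\in E_y$, $t\ge0$, and $E_y\subset\operatorname{Int}C\cup\{0\}$, $F_y\cap C=\{0\}$; under (FWW) such a separation exists along every compact invariant set. The $k$-Lyapunov exponent is $\lambda_{kz}=\limsup_{t\to+\infty}t^{-1}\log\inf_{v\in E_z,\|v\|=1}\|D_z\Phi_tv\|$. *)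

theory Defs
  imports "HOL-Analysis.Analysis"
begin

type_synonym 'n flow = "real \<Rightarrow> real^'n \<Rightarrow> real^'n"

definition Dflow :: "'n::finite flow \<Rightarrow> real \<Rightarrow> real^'n \<Rightarrow> real^'n \<Rightarrow> real^'n" where
  "Dflow \<Phi> t x = frechet_derivative (\<Phi> t) (at x)"

definition is_flow :: "'n::finite flow \<Rightarrow> bool" where
  "is_flow \<Phi> \<longleftrightarrow> (\<forall>x. \<Phi> 0 x = x) \<and> (\<forall>s t x. \<Phi> (s + t) x = \<Phi> s (\<Phi> t x))
     \<and> continuous_on UNIV (\<lambda>(t, x). \<Phi> t x)"

definition C1_alpha_flow :: "real \<Rightarrow> 'n::finite flow \<Rightarrow> bool" where
  "C1_alpha_flow \<alpha> \<Phi> \<longleftrightarrow> is_flow \<Phi> \<and>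
     (\<forall>t x. \<Phi> t differentiable (at x)) \<and>
     (\<forall>t x. \<exists>r>0. \<exists>L. \<forall>y\<in>ball x r. \<forall>z\<in>ball x r.
         onorm (\<lambda>v. Dflow \<Phi> t y v - Dflow \<Phi> t z v) \<le> L * dist y z powr \<alpha>)"

definition k_cone :: "nat \<Rightarrow> (real^'n::finite) set \<Rightarrow> bool" where
  "k_cone k C \<longleftrightarrow> closed C \<and> (\<forall>v\<in>C. \<forall>l::real. l *\<^sub>R v \<in> C) \<and>
     (\<exists>W. subspace W \<and> W \<subseteq> C \<and> dim W = k) \<and>
     (\<forall>W. subspace W \<and> W \<subseteq> C \<longrightarrow> dim W \<le> k)"

definition k_solid :: "nat \<Rightarrow> (real^'n::finite) set \<Rightarrow> bool" where
  "k_solid k C \<longleftrightarrow> (\<exists>W. subspace W \<and> dim W = k \<and> W - {0} \<subseteq> interior C)"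

definition strongly_monotone :: "'n::finite flow \<Rightarrow> (real^'n) set \<Rightarrow> bool" where
  "strongly_monotone \<Phi> C \<longleftrightarrow>
     (\<forall>x y t. x - y \<in> C \<and> t \<ge> 0 \<longrightarrow> \<Phi> t x - \<Phi> t y \<in> C) \<and>
     (\<forall>x y t. x \<noteq> y \<and> x - y \<in> C \<and> t > 0 \<longrightarrow> \<Phi> t x - \<Phi> t y \<in> interior C)"

definition FWW :: "'n::finite flow \<Rightarrow> nat \<Rightarrow> (real^'n) set \<Rightarrow> bool" where
  "FWW \<Phi> k C \<longleftrightarrow> (\<exists>\<alpha>. 0 < \<alpha> \<and> \<alpha> \<le> 1 \<and> C1_alpha_flow \<alpha> \<Phi>) \<and>
     k_cone k C \<and> k_solid k C \<and> strongly_monotone \<Phi> C \<and>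
     (\<forall>t>0. \<forall>x. Dflow \<Phi> t x ` (C - {0}) \<subseteq> interior C)"

definition omega_limit :: "'n::finite flow \<Rightarrow> real^'n \<Rightarrow> (real^'n) set" where
  "omega_limit \<Phi> x = {y. \<exists>s::nat \<Rightarrow> real. filterlim s at_top sequentially \<and>
                           (\<lambda>m. \<Phi> (s m) x) \<longlonglongrightarrow> y}"

definition omega_compact :: "'n::finite flow \<Rightarrow> (real^'n) set \<Rightarrow> bool" where
  "omega_compact \<Phi> D \<longleftrightarrow> (\<forall>x\<in>D. bounded ((\<lambda>t. \<Phi> t x) ` {0..})) \<and>
     bounded (\<Union>x\<in>D. omega_limit \<Phi> x)"

definition gap :: "(real^'n::finite) set \<Rightarrow> (real^'n) set \<Rightarrow> real" where
  "gap U V = max (Sup ({0} \<union> (\<lambda>u. infdist u V) ` {u\<in>U. norm u = 1}))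
                 (Sup ({0} \<union> (\<lambda>v. infdist v U) ` {v\<in>V. norm v = 1}))"

definition gap_continuous_on :: "(real^'n::finite) set \<Rightarrow> (real^'n \<Rightarrow> (real^'n) set) \<Rightarrow> bool" where
  "gap_continuous_on K E \<longleftrightarrow> (\<forall>y\<in>K. \<forall>\<epsilon>>0. \<exists>d>0. \<forall>y'\<in>K. dist y' y < d \<longrightarrow> gap (E y') (E y) < \<epsilon>)"

definition exp_separation ::
  "'n::finite flow \<Rightarrow> nat \<Rightarrow> (real^'n) set \<Rightarrow> (real^'n) set \<Rightarrow>
   (real^'n \<Rightarrow> (real^'n) set) \<Rightarrow> (real^'n \<Rightarrow> (real^'n) set) \<Rightarrow> bool" where
  "exp_separation \<Phi> k C K E F \<longleftrightarrow>
     gap_continuous_on K E \<and> gap_continuous_on K F \<and>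
     (\<forall>y\<in>K. subspace (E y) \<and> dim (E y) = k \<and> subspace (F y) \<and> dim (F y) = CARD('n) - k \<and>
              E y + F y = UNIV \<and> E y \<inter> F y = {0}) \<and>
     (\<forall>y\<in>K. \<forall>t>0. Dflow \<Phi> t y ` E y = E (\<Phi> t y) \<and> Dflow \<Phi> t y ` F y \<subseteq> F (\<Phi> t y)) \<and>
     (\<exists>M>0. \<exists>\<gamma>. 0 < \<gamma> \<and> \<gamma> < 1 \<and>
        (\<forall>y\<in>K. \<forall>t\<ge>0. \<forall>w\<in>F y. \<forall>v\<in>E y. norm w = 1 \<and> norm v = 1 \<longrightarrow>
            norm (Dflow \<Phi> t y w) \<le> M * \<gamma> powr t * norm (Dflow \<Phi> t y v))) \<and>
     (\<forall>y\<in>K. E y \<subseteq> interior C \<union> {0} \<and> F y \<inter> C = {0})"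

definition lyap_k :: "'n::finite flow \<Rightarrow> (real^'n \<Rightarrow> (real^'n) set) \<Rightarrow> real^'n \<Rightarrow> ereal" where
  "lyap_k \<Phi> E z = Limsup at_top (\<lambda>t. ereal (ln (INF v\<in>{v\<in>E z. norm v = 1}. norm (Dflow \<Phi> t z v)) / t))"

end

theory Submission
  imports Defs
begin

lemma proj_bound:
  fixes E F C :: "(real^'n::finite) set"
  assumes sE: "subspace E" and sF: "subspace F" and EF: "E + F = UNIV" and EF0: "E \<inter> F = {0}"
    and Cc: "closed C" and Cs: "\<forall>v\<in>C. \<forall>l::real. l *\<^sub>R v \<in> C" and FC: "F \<inter> C = {0}"
  shows "\<exists>c>0. \<exists>B\<ge>0. \<forall>v\<in>C. \<exists>e\<in>E. v - e \<in> F \<and> c * norm v \<le> norm e \<and> norm (v - e) \<le> B * norm v"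
proof -
  have ex: "\<exists>e. e \<in> E \<and> v - e \<in> F" for v
  proof -
    have "v \<in> E + F" using EF by simp
    then obtain a b where "v = a + b" "a \<in> E" "b \<in> F" by (rule set_plus_elim)
    then show ?thesis by (intro exI[of _ a]) auto
  qed
  have uniq: "e1 = e2" if "e1 \<in> E" "v - e1 \<in> F" "e2 \<in> E" "v - e2 \<in> F" for v e1 e2
  proof -
    have "e1 - e2 \<in> E" using that sE by (simp add: subspace_diff)
    moreover have "(v - e2) - (v - e1) \<in> F" using subspace_diff[OF sF that(4) that(2)] .
    ultimately have "e1 - e2 \<in> E \<inter> F" by (simp add: algebra_simps)
    then show ?thesis using EF0 by auto
  qed
  define P where "P v = (THE e. e \<in> E \<and> v - e \<in> F)" for v
  have P: "P v \<in> E \<and> v - P v \<in> F" for v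
    unfolding P_def by (rule theI') (use ex uniq in blast)
  have Peq: "P v = e" if "e \<in> E" "v - e \<in> F" for v e
    using uniq[OF P[of v, THEN conjunct1] P[of v, THEN conjunct2] that] .
  have linP: "linear P"
  proof (rule linearI)
    fix a b
    show "P (a + b) = P a + P b"
      apply (rule Peq)
      using P[of a] P[of b] sE sF
       apply (simp add: subspace_add)
      using subspace_add[OF sF, of "a - P a" "b - P b"] P[of a] P[of b] by (simp add: algebra_simps)
  next
    fix r :: real and a
    show "P (r *\<^sub>R a) = r *\<^sub>R P a"
      apply (rule Peq)
      using P[of a] sE subspace_scale apply blast
      using subspace_scale[OF sF, of "a - P a" r] P[of a] by (simp add: algebra_simps)
  qed
  then have blP: "bounded_linear P" by (simp add: linear_conv_bounded_linear)
  then obtain K where K: "\<And>v. norm (P v) \<le> norm v * K" and Kp: "K > 0"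
    using bounded_linear.pos_bounded by blast
  have Bb: "norm (v - P v) \<le> (1 + K) * norm v" for v
    using norm_triangle_ineq4[of v "P v"] K[of v] by (simp add: algebra_simps)
  define S where "S = C \<inter> sphere 0 1"
  have cS: "compact S" unfolding S_def using Cc by (simp add: compact_Int_closed closed_Int_compact)
  have cont: "continuous_on S (\<lambda>v. norm (P v))"
    using blP by (intro continuous_intros) (simp add: linear_continuous_on)
  obtain c where cpos: "c > 0" and cS: "\<And>v. v \<in> S \<Longrightarrow> c \<le> norm (P v)"
  proof (cases "S = {}")
    case True then show ?thesis using that[of 1] by auto
  next
    case False
    then obtain v0 where v0: "v0 \<in> S" "\<And>v. v \<in> S \<Longrightarrow> norm (P v0) \<le> norm (P v)"
      using continuous_attains_inf[OF cS False cont] by blast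
    have "P v0 \<noteq> 0"
    proof
      assume "P v0 = 0"
      then have "v0 \<in> F" using P[of v0] by simp
      then have "v0 \<in> F \<inter> C" using v0 unfolding S_def by auto
      then show False using FC v0 unfolding S_def by auto
    qed
    then show ?thesis using that[of "norm (P v0)"] v0 by auto
  qed
  show ?thesis
  proof (intro exI conjI ballI)
    show "c > 0" by fact
    show "1 + K \<ge> 0" using Kp by simp
    fix v assume v: "v \<in> C"
    show "\<exists>e\<in>E. v - e \<in> F \<and> c * norm v \<le> norm e \<and> norm (v - e) \<le> (1 + K) * norm v"
    proof (intro bexI[of _ "P v"] conjI)
      show "P v \<in> E" "v - P v \<in> F" using P by auto
      show "norm (v - P v) \<le> (1 + K) * norm v" by (rule Bb)
      show "c * norm v \<le> norm (P v)"
      proof (cases "v = 0")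
        case True then show ?thesis by simp
      next
        case False
        have "(1 / norm v) *\<^sub>R v \<in> S" unfolding S_def using v Cs False by auto
        then have "c \<le> norm (P ((1 / norm v) *\<^sub>R v))" by (rule cS)
        also have "\<dots> = norm (P v) / norm v"
          using linear_scale[OF linP] by simp
        finally show ?thesis using False by (simp add: field_simps)
      qed
    qed
  qed
qed


lemma powr_ev_small:
  fixes \<gamma> \<epsilon> :: real
  assumes "0 < \<gamma>" "\<gamma> < 1" "\<epsilon> > 0"
  shows "eventually (\<lambda>T. \<gamma> powr T \<le> \<epsilon>) at_top"
proof (rule eventually_at_top_linorderI[of "ln \<epsilon> / ln \<gamma>"])
  fix T assume T: "ln \<epsilon> / ln \<gamma> \<le> T"
  have lg: "ln \<gamma> < 0" using assms by simp
  have "T * ln \<gamma> \<le> (ln \<epsilon> / ln \<gamma>) * ln \<gamma>"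
    using mult_right_mono_neg[OF T, of "ln \<gamma>"] lg by simp
  also have "\<dots> = ln \<epsilon>" using lg by simp
  finally have "exp (T * ln \<gamma>) \<le> exp (ln \<epsilon>)" by simp
  then show "\<gamma> powr T \<le> \<epsilon>" using assms by (simp add: powr_def)
qed

lemma expand:
  fixes A :: "real \<Rightarrow> real^'n::finite \<Rightarrow> real^'n" and E F C :: "(real^'n) set"
  assumes lin: "\<And>t. linear (A t)"
    and sE: "subspace E" and sF: "subspace F" and EF: "E + F = UNIV" and EF0: "E \<inter> F = {0}"
    and Ene: "E \<noteq> {0}"
    and Cc: "closed C" and Cs: "\<forall>v\<in>C. \<forall>l::real. l *\<^sub>R v \<in> C" and FC: "F \<inter> C = {0}"
    and M: "M > 0" and g0: "0 < \<gamma>" and g1: "\<gamma> < 1"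
    and sep: "\<forall>t\<ge>0. \<forall>w\<in>F. \<forall>v\<in>E. norm w = 1 \<and> norm v = 1 \<longrightarrow> norm (A t w) \<le> M * \<gamma> powr t * norm (A t v)"
    and ly: "Limsup at_top (\<lambda>t. ereal (ln (INF v\<in>{v\<in>E. norm v = 1}. norm (A t v)) / t)) > 0"
  shows "\<exists>T>0. \<forall>v\<in>C. 4 * norm v \<le> norm (A T v)"
proof -
  obtain c B where c: "c > 0" and B: "B \<ge> 0" and cB: "\<And>v. v \<in> C \<Longrightarrow> \<exists>e\<in>E. v - e \<in> F \<and> c * norm v \<le> norm e \<and> norm (v - e) \<le> B * norm v"
    using proj_bound[OF sE sF EF EF0 Cc Cs FC] by blast
  define U where "U = {v\<in>E. norm v = 1}"
  define m where "m t = (INF v\<in>U. norm (A t v))" for t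
  obtain u0 where u0: "u0 \<in> E" "u0 \<noteq> 0" using Ene sE subspace_0 by blast
  have "(1 / norm u0) *\<^sub>R u0 \<in> U" unfolding U_def using u0 sE by (simp add: subspace_scale)
  then have Une: "U \<noteq> {}" by blast
  have m0: "0 \<le> m t" for t unfolding m_def using Une by (intro cINF_greatest) auto
  have mE: "m t * norm e \<le> norm (A t e)" if e: "e \<in> E" for t e
  proof (cases "e = 0")
    case True then show ?thesis by simp
  next
    case False
    have "(1 / norm e) *\<^sub>R e \<in> U" unfolding U_def using e False sE by (simp add: subspace_scale)
    then have "m t \<le> norm (A t ((1 / norm e) *\<^sub>R e))" unfolding m_def
      by (intro cINF_lower) (auto intro: bdd_belowI[of _ 0])
    also have "\<dots> = norm (A t e) / norm e" using linear_scale[OF lin] by simp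
    finally show ?thesis using False by (simp add: field_simps)
  qed
  have mF: "norm (A t f) \<le> M * \<gamma> powr t * m t * norm f" if f: "f \<in> F" and t: "t \<ge> 0" for t f
  proof (cases "f = 0")
    case True then show ?thesis using linear_0[OF lin] by simp
  next
    case False
    have fu: "(1 / norm f) *\<^sub>R f \<in> F" "norm ((1 / norm f) *\<^sub>R f) = 1" using f False sF by (auto simp: subspace_scale)
    have "norm (A t ((1 / norm f) *\<^sub>R f)) / (M * \<gamma> powr t) \<le> m t" unfolding m_def
    proof (rule cINF_greatest[OF Une])
      fix v assume "v \<in> U"
      then have "norm (A t ((1 / norm f) *\<^sub>R f)) \<le> M * \<gamma> powr t * norm (A t v)"
        using sep t fu unfolding U_def by blast
      then show "norm (A t ((1 / norm f) *\<^sub>R f)) / (M * \<gamma> powr t) \<le> norm (A t v)"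
        using M g0 by (simp add: field_simps)
    qed
    moreover have "norm (A t ((1 / norm f) *\<^sub>R f)) = norm (A t f) / norm f" using linear_scale[OF lin] by simp
    ultimately show ?thesis using M g0 False by (simp add: field_simps)
  qed
  obtain a where a0: "0 < a" and aL: "ereal a < Limsup at_top (\<lambda>t. ereal (ln (m t) / t))"
    using ereal_dense2[OF ly[folded U_def, folded m_def]] by (metis ereal_less(2))
  have freq: "frequently (\<lambda>t. a < ln (m t) / t) at_top"
  proof -
    have "\<not> (ereal a \<ge> Limsup at_top (\<lambda>t. ereal (ln (m t) / t)))" using aL by simp
    then obtain y where y: "y > ereal a" and ny: "\<not> eventually (\<lambda>t. y > ereal (ln (m t) / t)) at_top"
      unfolding Limsup_le_iff by blast
    have "frequently (\<lambda>t. \<not> y > ereal (ln (m t) / t)) at_top" using ny by (simp add: not_eventually)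
    then show ?thesis
      by (rule frequently_elim1) (use y in \<open>metis less_le_trans not_less ereal_less_eq(3)\<close>)
  qed
  have ev1: "eventually (\<lambda>T. \<gamma> powr T \<le> c / (2 * M * (B + 1))) at_top"
    using c M B by (intro powr_ev_small g0 g1) auto
  have ev2: "eventually (\<lambda>T. T \<ge> max 1 (ln (8 / c) / a)) at_top" by (rule eventually_ge_at_top)
  obtain T where T1: "\<gamma> powr T \<le> c / (2 * M * (B + 1))" and T2: "T \<ge> max 1 (ln (8 / c) / a)"
    and T3: "a < ln (m T) / T"
    using frequently_ex[OF frequently_eventually_conj[OF freq eventually_conj[OF ev1 ev2]]] by blast
  have Tp: "T > 0" using T2 by simp
  have "a * T < ln (m T)" using T3 Tp by (simp add: field_simps)
  moreover have "ln (8 / c) \<le> a * T" using T2 a0 by (simp add: field_simps)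
  ultimately have lnm: "ln (8 / c) < ln (m T)" by simp
  have "m T \<noteq> 0" using \<open>a * T < ln (m T)\<close> a0 Tp by (metis ln_0 mult_pos_pos not_less_iff_gr_or_eq)
  then have mTp: "m T > 0" using m0[of T] by simp
  then have m8: "8 / c < m T" using lnm c by simp
  have MB: "M * \<gamma> powr T * B \<le> c / 2"
  proof -
    have "M * \<gamma> powr T * B \<le> M * (c / (2 * M * (B + 1))) * B"
      using T1 M B by (intro mult_right_mono mult_left_mono) auto
    also have "\<dots> = c / 2 * (B / (B + 1))"
    proof -
      have "B + 1 > 0" using B by simp
      have "M * (c / (2 * M * (B + 1))) = c / (2 * (B + 1))" using M by simp
      then show ?thesis by simp
    qed
    also have "\<dots> \<le> c / 2"
    proof -
      have "B / (B + 1) \<le> 1" using B by simp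
      then show ?thesis using c by (intro mult_left_le) auto
    qed
    finally show ?thesis .
  qed
  show ?thesis
  proof (intro exI conjI ballI)
    show "T > 0" by fact
    fix v assume v: "v \<in> C"
    obtain e where e: "e \<in> E" "v - e \<in> F" "c * norm v \<le> norm e" "norm (v - e) \<le> B * norm v"
      using cB[OF v] by blast
    have Av: "A T v = A T e + A T (v - e)" using linear_add[OF lin, of T e "v - e"] by simp
    have "norm (A T v) \<ge> norm (A T e) - norm (A T (v - e))"
      unfolding Av using norm_triangle_ineq2[of "A T e" "- A T (v - e)"] by simp
    moreover have "norm (A T e) \<ge> m T * (c * norm v)"
      using mE[OF e(1)] e(3) mTp by (meson mult_left_mono less_imp_le order_trans)
    moreover have "norm (A T (v - e)) \<le> m T * (M * \<gamma> powr T * B * norm v)"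
    proof -
      have "norm (A T (v - e)) \<le> M * \<gamma> powr T * m T * norm (v - e)" using mF[OF e(2)] Tp by simp
      also have "\<dots> \<le> M * \<gamma> powr T * m T * (B * norm v)"
        using e(4) M g0 mTp by (intro mult_left_mono) auto
      finally show ?thesis by (simp add: algebra_simps)
    qed
    moreover have "M * \<gamma> powr T * B * norm v \<le> c / 2 * norm v"
      using MB by (intro mult_right_mono) auto
    moreover have "m T * (M * \<gamma> powr T * B * norm v) \<le> m T * (c / 2 * norm v)"
      using mTp MB by (intro mult_left_mono mult_right_mono) auto
    moreover have "m T * (c * norm v) - m T * (c / 2 * norm v) = m T * (c / 2 * norm v)"
      by (simp add: algebra_simps)
    ultimately have "norm (A T v) \<ge> m T * (c / 2 * norm v)"
      by linarith
    moreover have "m T * (c / 2 * norm v) \<ge> 8 / c * (c / 2 * norm v)"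
      using m8 c by (intro mult_right_mono) auto
    moreover have "8 / c * (c / 2 * norm v) = 4 * norm v" using c by simp
    ultimately show "4 * norm v \<le> norm (A T v)" by simp
  qed
qed


lemma local_expand:
  fixes \<Phi> :: "real \<Rightarrow> real^'n::finite \<Rightarrow> real^'n" and C :: "(real^'n) set"
  assumes diff: "\<And>x. \<Phi> T differentiable (at x)"
    and hold: "\<exists>r>0. \<exists>L. \<forall>y\<in>ball z r. \<forall>z'\<in>ball z r.
         onorm (\<lambda>v. Dflow \<Phi> T y v - Dflow \<Phi> T z' v) \<le> L * dist y z' powr \<alpha>"
    and \<alpha>: "0 < \<alpha>"
    and exp4: "\<forall>v\<in>C. 4 * norm v \<le> norm (Dflow \<Phi> T z v)"
  shows "\<exists>\<rho>>0. \<forall>p\<in>ball z \<rho>. \<forall>q. dist q p < \<rho> \<and> q - p \<in> C \<longrightarrow> 2 * norm (q - p) \<le> norm (\<Phi> T q - \<Phi> T p)"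
proof -
  obtain r L where r: "r > 0" and L: "\<forall>y\<in>ball z r. \<forall>z'\<in>ball z r.
         onorm (\<lambda>v. Dflow \<Phi> T y v - Dflow \<Phi> T z' v) \<le> L * dist y z' powr \<alpha>"
    using hold by blast
  define r' where "r' = min r ((1 / (\<bar>L\<bar> + 1)) powr (1 / \<alpha>))"
  have r'p: "r' > 0" unfolding r'_def using r by simp
  have r'r: "r' \<le> r" unfolding r'_def by simp
  have r'a: "r' powr \<alpha> \<le> 1 / (\<bar>L\<bar> + 1)"
  proof -
    have "r' powr \<alpha> \<le> ((1 / (\<bar>L\<bar> + 1)) powr (1 / \<alpha>)) powr \<alpha>"
      unfolding r'_def using r \<alpha> by (intro powr_mono2) auto
    also have "\<dots> = 1 / (\<bar>L\<bar> + 1)" using \<alpha> by (simp add: powr_powr)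
    finally show ?thesis .
  qed
  have onb: "onorm (Dflow \<Phi> T y - Dflow \<Phi> T z) \<le> 1" if y: "y \<in> ball z r'" for y
  proof -
    have yz: "y \<in> ball z r" "z \<in> ball z r" using y r'r r by auto
    have "onorm (Dflow \<Phi> T y - Dflow \<Phi> T z) = onorm (\<lambda>v. Dflow \<Phi> T y v - Dflow \<Phi> T z v)"
      by (simp add: fun_diff_def)
    also have "\<dots> \<le> L * dist y z powr \<alpha>" using L yz by blast
    also have "\<dots> \<le> \<bar>L\<bar> * dist y z powr \<alpha>" by (intro mult_right_mono) auto
    also have "\<dots> \<le> \<bar>L\<bar> * r' powr \<alpha>"
      using y \<alpha> by (intro mult_left_mono powr_mono2) (auto simp: dist_commute)
    also have "\<dots> \<le> \<bar>L\<bar> * (1 / (\<bar>L\<bar> + 1))" using r'a by (intro mult_left_mono) auto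
    also have "\<dots> \<le> 1" by (simp add: field_simps)
    finally show ?thesis .
  qed
  have der: "(\<Phi> T has_derivative Dflow \<Phi> T y) (at y within ball z r')" for y
    unfolding Dflow_def using diff[of y] frechet_derivative_works has_derivative_at_withinI by blast
  show ?thesis
  proof (intro exI[of _ "r' / 2"] conjI ballI allI impI)
    show "r' / 2 > 0" using r'p by simp
    fix p q assume p: "p \<in> ball z (r' / 2)" and q: "dist q p < r' / 2 \<and> q - p \<in> C"
    have "dist z p < r' / 2" using p by simp
    then have pb: "p \<in> ball z r'" using zero_le_dist[of z p] unfolding mem_ball by linarith
    have qb: "q \<in> ball z r'" using p q dist_triangle[of z q p] by (auto simp: dist_commute)
    have seg: "p + t *\<^sub>R (q - p) \<in> ball z r'" if t: "t \<in> {0..1}" for t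
    proof -
      have "(1 - t) *\<^sub>R p + t *\<^sub>R q \<in> ball z r'"
        using convexD[OF convex_ball pb qb, of "1 - t" t] t by auto
      moreover have "(1 - t) *\<^sub>R p + t *\<^sub>R q = p + t *\<^sub>R (q - p)" by (simp add: algebra_simps)
      ultimately show ?thesis by simp
    qed
    have lin: "norm (\<Phi> T q - \<Phi> T p - Dflow \<Phi> T z (q - p)) \<le> norm (q - p) * 1"
      by (rule differentiable_bound_linearization[where S="ball z r'"])
         (use seg der onb r'p in auto)
    have "4 * norm (q - p) \<le> norm (Dflow \<Phi> T z (q - p))" using exp4 q by blast
    moreover have "norm (Dflow \<Phi> T z (q - p)) \<le> norm (\<Phi> T q - \<Phi> T p) + norm (\<Phi> T q - \<Phi> T p - Dflow \<Phi> T z (q - p))"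
      using norm_triangle_ineq4[of "\<Phi> T q - \<Phi> T p" "\<Phi> T q - \<Phi> T p - Dflow \<Phi> T z (q - p)"] by simp
    ultimately show "2 * norm (q - p) \<le> norm (\<Phi> T q - \<Phi> T p)" using lin norm_ge_zero[of "q - p"] by linarith
  qed
qed

theorem lemma4p4:
  fixes \<Phi> :: "real \<Rightarrow> real^'n \<Rightarrow> real^'n"
    and C D :: "(real^'n) set" and k :: nat and x :: "real^'n"
    and E F :: "real^'n \<Rightarrow> (real^'n) set"
  assumes "FWW \<Phi> k C" and "1 \<le> k"
    and "open D" and "omega_compact \<Phi> D" and "x \<in> D"
    and "exp_separation \<Phi> k C (omega_limit \<Phi> x) E F"
    and "\<forall>z\<in>omega_limit \<Phi> x. lyap_k \<Phi> E z > 0"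
  shows "\<exists>\<delta>>0. \<forall>y. y \<noteq> x \<and> y - x \<in> C \<longrightarrow>
            Limsup at_top (\<lambda>t. ereal (norm (\<Phi> t y - \<Phi> t x))) \<ge> ereal \<delta>"
proof -
  define K where "K = omega_limit \<Phi> x"
  obtain \<alpha> where \<alpha>: "0 < \<alpha>" and C1: "C1_alpha_flow \<alpha> \<Phi>" using assms(1) unfolding FWW_def by blast
  have flow: "is_flow \<Phi>" using C1 unfolding C1_alpha_flow_def by blast
  have diff: "\<And>t x. \<Phi> t differentiable (at x)" using C1 unfolding C1_alpha_flow_def by blast
  have hold: "\<And>t x. \<exists>r>0. \<exists>L. \<forall>y\<in>ball x r. \<forall>z\<in>ball x r.
         onorm (\<lambda>v. Dflow \<Phi> t y v - Dflow \<Phi> t z v) \<le> L * dist y z powr \<alpha>"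
    using C1 unfolding C1_alpha_flow_def by blast
  have f0: "\<And>x. \<Phi> 0 x = x" and fadd: "\<And>s t x. \<Phi> (s + t) x = \<Phi> s (\<Phi> t x)"
    using flow unfolding is_flow_def by auto
  have Cc: "closed C" and Cs: "\<forall>v\<in>C. \<forall>l::real. l *\<^sub>R v \<in> C"
    using assms(1) unfolding FWW_def k_cone_def by auto
  have mono: "\<And>x y t. x - y \<in> C \<Longrightarrow> t \<ge> 0 \<Longrightarrow> \<Phi> t x - \<Phi> t y \<in> C"
    using assms(1) unfolding FWW_def strongly_monotone_def by blast
  note es = assms(6)[unfolded exp_separation_def, folded K_def]
  have sepK: "\<forall>y\<in>K. subspace (E y) \<and> dim (E y) = k \<and> subspace (F y) \<and> dim (F y) = CARD('n) - k \<and>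
              E y + F y = UNIV \<and> E y \<inter> F y = {0}"
    using es[THEN conjunct2, THEN conjunct2, THEN conjunct1] .
  have EFC: "\<forall>y\<in>K. E y \<subseteq> interior C \<union> {0} \<and> F y \<inter> C = {0}"
    using es[THEN conjunct2, THEN conjunct2, THEN conjunct2, THEN conjunct2, THEN conjunct2] .
  obtain M \<gamma> where M: "M > 0" and g0: "0 < \<gamma>" and g1: "\<gamma> < 1"
    and sep: "\<forall>y\<in>K. \<forall>t\<ge>0. \<forall>w\<in>F y. \<forall>v\<in>E y. norm w = 1 \<and> norm v = 1 \<longrightarrow>
            norm (Dflow \<Phi> t y w) \<le> M * \<gamma> powr t * norm (Dflow \<Phi> t y v)"
    using es[THEN conjunct2, THEN conjunct2, THEN conjunct2, THEN conjunct2, THEN conjunct1] by blast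
  have linD: "linear (Dflow \<Phi> t z)" for t z
    unfolding Dflow_def using diff[of t z] frechet_derivative_works has_derivative_linear by blast
  have per: "\<exists>T>0. \<exists>\<rho>>0. \<forall>p\<in>ball z \<rho>. \<forall>q. dist q p < \<rho> \<and> q - p \<in> C \<longrightarrow>
               2 * norm (q - p) \<le> norm (\<Phi> T q - \<Phi> T p)" if z: "z \<in> K" for z
  proof -
    have Ene: "E z \<noteq> {0}"
    proof
      assume "E z = {0}"
      then have "dim (E z) = 0" by simp
      moreover have "dim (E z) = k" using sepK z by blast
      ultimately show False using assms(2) by simp
    qed
    have ly: "Limsup at_top (\<lambda>t. ereal (ln (INF v\<in>{v\<in>E z. norm v = 1}. norm (Dflow \<Phi> t z v)) / t)) > 0"
      using assms(7) z unfolding K_def lyap_k_def by blast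
    have sz: "subspace (E z)" "subspace (F z)" "E z + F z = UNIV" "E z \<inter> F z = {0}"
      using sepK z by auto
    have fz: "F z \<inter> C = {0}" using EFC z by blast
    have sepz: "\<forall>t\<ge>0. \<forall>w\<in>F z. \<forall>v\<in>E z. norm w = 1 \<and> norm v = 1 \<longrightarrow>
            norm (Dflow \<Phi> t z w) \<le> M * \<gamma> powr t * norm (Dflow \<Phi> t z v)"
      using sep z by blast
    obtain T where T: "T > 0" and T4: "\<forall>v\<in>C. 4 * norm v \<le> norm (Dflow \<Phi> T z v)"
      using expand[of "\<lambda>t. Dflow \<Phi> t z" "E z" "F z" C M \<gamma>, OF linD sz Ene Cc Cs fz M g0 g1 sepz ly]
      by blast
    show ?thesis using local_expand[OF diff hold \<alpha> T4] T by blast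
  qed
  define P where "P z T r \<longleftrightarrow> T > 0 \<and> r > 0 \<and> (\<forall>p\<in>ball z r. \<forall>q. dist q p < r \<and> q - p \<in> C \<longrightarrow>
               2 * norm (q - p) \<le> norm (\<Phi> T q - \<Phi> T p))" for z T r
  have "\<forall>z\<in>K. \<exists>Tr. P z (fst Tr) (snd Tr)"
  proof
    fix z assume "z \<in> K"
    then obtain T r where "P z T r" using per unfolding P_def by blast
    then show "\<exists>Tr. P z (fst Tr) (snd Tr)" by (intro exI[of _ "(T, r)"]) simp
  qed
  then obtain f where f: "\<forall>z\<in>K. P z (fst (f z)) (snd (f z))" by (rule bchoice[elim_format]) blast
  define TT where "TT z = fst (f z)" for z
  define \<rho> where "\<rho> z = snd (f z)" for z
  have TT: "\<And>z. z \<in> K \<Longrightarrow> TT z > 0" and \<rho>: "\<And>z. z \<in> K \<Longrightarrow> \<rho> z > 0"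
    using f unfolding P_def TT_def \<rho>_def by auto
  have exp2: "\<And>z p q. z \<in> K \<Longrightarrow> p \<in> ball z (\<rho> z) \<Longrightarrow> dist q p < \<rho> z \<Longrightarrow> q - p \<in> C \<Longrightarrow>
               2 * norm (q - p) \<le> norm (\<Phi> (TT z) q - \<Phi> (TT z) p)"
    using f unfolding P_def TT_def \<rho>_def by blast
  have Bx: "bounded ((\<lambda>t. \<Phi> t x) ` {0..})"
    using assms(4,5) unfolding omega_compact_def by blast
  have cover: "\<exists>\<eta>>0. \<exists>t1. \<forall>t\<ge>t1. \<exists>z\<in>K. \<eta> \<le> \<rho> z \<and> dist (\<Phi> t x) z < \<rho> z"
  proof (rule ccontr)
    assume "\<not> ?thesis"
    then have nc: "\<forall>\<eta>>0. \<forall>t1. \<exists>t\<ge>t1. \<forall>z\<in>K. \<eta> \<le> \<rho> z \<longrightarrow> \<rho> z \<le> dist (\<Phi> t x) z"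
      by (simp add: not_less) (meson not_le)
    have "\<forall>m::nat. \<exists>t\<ge>real m. \<forall>z\<in>K. 1 / (real m + 1) \<le> \<rho> z \<longrightarrow> \<rho> z \<le> dist (\<Phi> t x) z"
    proof
      fix m :: nat
      have "1 / (real m + 1) > 0" by simp
      then show "\<exists>t\<ge>real m. \<forall>z\<in>K. 1 / (real m + 1) \<le> \<rho> z \<longrightarrow> \<rho> z \<le> dist (\<Phi> t x) z"
        using nc by blast
    qed
    then obtain s where s1: "\<And>m. s m \<ge> real m"
      and s2: "\<And>m z. z \<in> K \<Longrightarrow> 1 / (real m + 1) \<le> \<rho> z \<Longrightarrow> \<rho> z \<le> dist (\<Phi> (s m) x) z"
      by metis
    have "range (\<lambda>m. \<Phi> (s m) x) \<subseteq> (\<lambda>t. \<Phi> t x) ` {0..}"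
    proof (clarsimp)
      fix m
      have "0 \<le> s m" using s1[of m] of_nat_0_le_iff[of m] by linarith
      then show "\<Phi> (s m) x \<in> (\<lambda>t. \<Phi> t x) ` {0..}" by auto
    qed
    then have "bounded (range (\<lambda>m. \<Phi> (s m) x))" using Bx bounded_subset by blast
    then obtain l r where r: "strict_mono r" and lim: "((\<lambda>m. \<Phi> (s m) x) \<circ> r) \<longlonglongrightarrow> l"
      using bounded_imp_convergent_subsequence by blast
    have rm: "m \<le> r m" for m using seq_suble[OF r] .
    have sr: "real m \<le> s (r m)" for m using s1[of "r m"] rm[of m] by (meson of_nat_le_iff order.trans)
    have "filterlim (\<lambda>m. s (r m)) at_top sequentially"
      by (rule filterlim_at_top_mono[OF filterlim_real_sequentially]) (use sr in auto)
    moreover have "(\<lambda>m. \<Phi> (s (r m)) x) \<longlonglongrightarrow> l" using lim by (simp add: o_def)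
    ultimately have lK: "l \<in> K" unfolding K_def omega_limit_def by blast
    have rl: "\<rho> l > 0" using \<rho>[OF lK] .
    obtain n :: nat where n: "n > 0" "inverse (real n) < \<rho> l"
      using ex_inverse_of_nat_less[OF rl] by blast
    have ev1: "eventually (\<lambda>m. dist (\<Phi> (s (r m)) x) l < \<rho> l) sequentially"
      using tendstoD[OF \<open>(\<lambda>m. \<Phi> (s (r m)) x) \<longlonglongrightarrow> l\<close> rl] .
    then obtain N where N: "\<And>m. m \<ge> N \<Longrightarrow> dist (\<Phi> (s (r m)) x) l < \<rho> l"
      unfolding eventually_sequentially by blast
    define m where "m = max N n"
    have d: "dist (\<Phi> (s (r m)) x) l < \<rho> l" using N m_def by simp
    have "real n \<le> real (r m) + 1" using rm[of m] unfolding m_def by linarith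
    then have "1 / (real (r m) + 1) \<le> inverse (real n)"
      using n by (simp add: field_simps)
    then have "1 / (real (r m) + 1) \<le> \<rho> l" using n by linarith
    then have "\<rho> l \<le> dist (\<Phi> (s (r m)) x) l" using s2[OF lK] by blast
    then show False using d by simp
  qed
  then obtain \<eta> t1 where \<eta>: "\<eta> > 0"
    and t1: "\<And>t. t \<ge> t1 \<Longrightarrow> \<exists>z\<in>K. \<eta> \<le> \<rho> z \<and> dist (\<Phi> t x) z < \<rho> z" by blast
  show ?thesis
  proof (intro exI[of _ \<eta>] conjI allI impI)
    show "\<eta> > 0" by fact
    fix y assume y: "y \<noteq> x \<and> y - x \<in> C"
    define w where "w t = \<Phi> t y - \<Phi> t x" for t
    show "ereal \<eta> \<le> Limsup at_top (\<lambda>t. ereal (norm (\<Phi> t y - \<Phi> t x)))"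
    proof (rule ccontr)
      assume "\<not> ?thesis"
      then have "Limsup at_top (\<lambda>t. ereal (norm (\<Phi> t y - \<Phi> t x))) < ereal \<eta>" by simp
      from Limsup_lessD[OF this] obtain t2 where t2: "\<And>t. t \<ge> t2 \<Longrightarrow> norm (w t) < \<eta>"
        unfolding eventually_at_top_linorder w_def by auto
      define t0 where "t0 = max 0 (max t1 t2)"
      have step: "2 * norm (w s) \<le> norm (w (TT z + s))" "TT z + s \<ge> t0"
        if s: "s \<ge> t0" "z \<in> K" "\<eta> \<le> \<rho> z" "dist (\<Phi> s x) z < \<rho> z" for s z
      proof -
        have "\<Phi> s x \<in> ball z (\<rho> z)" using s by (simp add: dist_commute)
        moreover have "dist (\<Phi> s y) (\<Phi> s x) < \<rho> z" using t2[of s] s t0_def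
          unfolding w_def dist_norm by simp
        moreover have "\<Phi> s y - \<Phi> s x \<in> C" using mono[of y x s] y s t0_def by simp
        ultimately have "2 * norm (\<Phi> s y - \<Phi> s x) \<le> norm (\<Phi> (TT z) (\<Phi> s y) - \<Phi> (TT z) (\<Phi> s x))"
          using exp2[OF s(2)] by blast
        then show "2 * norm (w s) \<le> norm (w (TT z + s))" unfolding w_def fadd by simp
        show "TT z + s \<ge> t0" using TT[OF s(2)] s by simp
      qed
      have grow: "\<exists>s\<ge>t0. 2 ^ j * norm (w t0) \<le> norm (w s)" for j :: nat
      proof (induction j)
        case 0 then show ?case by auto
      next
        case (Suc j)
        then obtain s where s: "s \<ge> t0" "2 ^ j * norm (w t0) \<le> norm (w s)" by blast
        obtain z where z: "z \<in> K" "\<eta> \<le> \<rho> z" "dist (\<Phi> s x) z < \<rho> z"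
          using t1[of s] s t0_def by auto
        show ?case
          using step[OF s(1) z] s(2) by (intro exI[of _ "TT z + s"]) auto
      qed
      have w0: "norm (w t0) > 0"
      proof -
        have "w t0 \<noteq> 0"
        proof
          assume "w t0 = 0"
          then have "\<Phi> (- t0) (\<Phi> t0 y) = \<Phi> (- t0) (\<Phi> t0 x)" unfolding w_def by simp
          then have "\<Phi> (- t0 + t0) y = \<Phi> (- t0 + t0) x" unfolding fadd .
          then show False using y f0 by simp
        qed
        then show ?thesis by simp
      qed
      obtain j :: nat where j: "\<eta> / norm (w t0) < 2 ^ j" using real_arch_pow[of 2 "\<eta> / norm (w t0)"] by auto
      obtain s where s: "s \<ge> t0" "2 ^ j * norm (w t0) \<le> norm (w s)" using grow by blast
      have "\<eta> < 2 ^ j * norm (w t0)" using j w0 by (simp add: field_simps)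
      moreover have "norm (w s) < \<eta>" using t2[of s] s t0_def by simp
      ultimately show False using s by simp
    qed
  qed
qed

end
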